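(* Let $X\in\mathbb{R}^{n\times d}$, $\Theta\in\mathbb{R}^{d\times C}$, $\widetilde A\in\mathbb{R}^{n\times n}$, $L\ge1$, a node $u$, and a matrix $\widetilde E\in\mathbb{R}^{n\times n}$ with $\Delta_u:=\widetilde A^L_u-\widetilde E_u\neq 0$. Let $\mathcal{K}$ be a finite nonempty index set of perturbations, and let $\Sigma_k\in\mathbb{R}^{n\times d}$, $k\in\mathcal{K}$, be random matrices whose $|\mathcal{K}|nd$ entries are i.i.d. $\mathcal{N}(0,\sigma^2)$ with $\sigma>0$; set $\Sigma_0:=0$. With $\Psi_u(M,Y)=\mathrm{softmax}(M_uY\Theta)$, define $$S_\Psi := \frac{1}{|\mathcal{K}|+1}\sum_{k\in\mathcal{K}\cup\{0\}}\big\lVert\Psi_u(\widetilde A^L,X+\Sigma_k)-\Psi_u(\widetilde E,X+\Sigma_k)\big\rVert_2.$$ Then for every $\xi$, $$\mathbb{P}\big(S_\Psi\le\xi\big)\;\ge\;F_{\chi^2_{|\mathcal{K}|nd}}\!\left(\frac{\xi-\gamma_1\lVert\Delta_u\rVert_2}{\gamma_2\lVert\Delta_u\rVert_2\,\sigma}-|\mathcal{K}|\right),$$ where $\gamma_1=\lVert\Theta^\intercal\rVert_2\lVert X^\intercal\rVert_2$, $\gamma_2=\lVert\Theta^\intercal\rVert_2/(|\mathcal{K}|+1)$, and $F_{\chi^2_{m}}$ is the cumulative distribution function of a chi-square random variable with $m$ degrees of freedom.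
   Context: $\widetilde A = (D+I_n)^{-1/2}(A+I_n)(D+I_n)^{-1/2}$ is the normalized adjacency matrix with self-loops of a graph with adjacency matrix $A$ and diagonal degree matrix $D$; $\widetilde A^L$ is its $L$-th power and $M_u$ the $u$-th row of a matrix $M$. $\widetilde E$ is the powered propagation matrix after applying an explanation $\mathcal{E}_u$ for node $u$. For matrices, $\lVert\cdot\rVert_2$ denotes the spectral norm; for vectors, the Euclidean norm. *)

theory Defs
  imports "HOL-Analysis.Analysis" "HOL-Probability.Probability"
begin

definition spec_norm :: "real^'n^'m \<Rightarrow> real" where
  "spec_norm A = onorm (\<lambda>x. A *v x)"

definition matpow :: "real^'n^'n \<Rightarrow> nat \<Rightarrow> real^'n^'n" where
  "matpow A L = ((\<lambda>B. A ** B) ^^ L) (mat 1)"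

definition softmax :: "real^'c \<Rightarrow> real^'c" where
  "softmax v = (\<chi> j. exp (v $ j) / (\<Sum>i\<in>UNIV. exp (v $ i)))"

definition Psi :: "real^'c^'d \<Rightarrow> 'n \<Rightarrow> real^'n^'n \<Rightarrow> real^'d^'n \<Rightarrow> real^'c" where
  "Psi \<Theta> u M Y = softmax (((M $ u) v* Y) v* \<Theta>)"

definition chi_square_density :: "nat \<Rightarrow> real \<Rightarrow> real" where
  "chi_square_density m x =
     (if x > 0 then x powr (real m / 2 - 1) * exp (- x / 2) / (2 powr (real m / 2) * Gamma (real m / 2))
      else 0)"

definition chi_square_cdf :: "nat \<Rightarrow> real \<Rightarrow> real" where
  "chi_square_cdf m x = cdf (density lborel (\<lambda>t. ennreal (chi_square_density m t))) x"

end

theory Submission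
  imports Defs
begin

definition gd :: "real \<Rightarrow> real \<Rightarrow> real" where
  "gd a x = (if x > 0 then x powr (a - 1) * exp (- x / 2) / (2 powr a * Gamma a) else 0)"

lemma gd_nonneg: "a > 0 \<Longrightarrow> gd a x \<ge> 0"
  using Gamma_real_pos[of a] by (auto simp: gd_def)

lemma gd_meas[measurable]: "gd a \<in> borel_measurable borel"
  unfolding gd_def by measurable

lemma gd_int:
  assumes a: "a > 0"
  shows "(\<integral>\<^sup>+x. ennreal (gd a x) \<partial>lborel) = 1"
proof -
  have G: "Gamma a > 0" using Gamma_real_pos[OF a] .
  have "(\<integral>\<^sup>+x. ennreal (gd a x) \<partial>lborel) = 2 * (\<integral>\<^sup>+x. ennreal (gd a (0 + 2 * x)) \<partial>lborel)"
    by (subst nn_integral_real_affine[where c=2 and t=0]) auto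
  also have "\<dots> = (\<integral>\<^sup>+x. 2 * ennreal (gd a (0 + 2 * x)) \<partial>lborel)"
    by (subst nn_integral_cmult) auto
  also have "\<dots> = (\<integral>\<^sup>+x. ennreal (indicator {0..} x * x powr (a - 1) / exp x) / ennreal (Gamma a) \<partial>lborel)"
  proof (intro nn_integral_cong)
    fix x :: real
    show "2 * ennreal (gd a (0 + 2 * x)) = ennreal (indicator {0..} x * x powr (a - 1) / exp x) / ennreal (Gamma a)"
    proof (cases "x > 0")
      case True
      have "2 * gd a (0 + 2 * x) = indicator {0..} x * x powr (a - 1) / exp x / Gamma a"
        using True G by (simp add: gd_def powr_mult_base powr_diff field_simps powr_mult exp_minus)
      moreover have "2 * ennreal (gd a (0 + 2 * x)) = ennreal (2 * gd a (0 + 2 * x))"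
        using gd_nonneg[OF a] by (simp add: ennreal_mult)
      moreover have "ennreal (indicator {0..} x * x powr (a - 1) / exp x) / ennreal (Gamma a)
          = ennreal (indicator {0..} x * x powr (a - 1) / exp x / Gamma a)"
        using True G by (subst divide_ennreal) auto
      ultimately show ?thesis by simp
    next
      case False
      then show ?thesis by (auto simp: gd_def indicator_def)
    qed
  qed
  also have "\<dots> = (\<integral>\<^sup>+x. ennreal (indicator {0..} x * x powr (a - 1) / exp x) \<partial>lborel) / ennreal (Gamma a)"
    unfolding divide_ennreal_def by (subst nn_integral_multc) auto
  also have "\<dots> = 1"
    using G by (simp add: Gamma_conv_nn_integral_real[OF a, symmetric] divide_ennreal)
  finally show ?thesis .
qed

lemma gd_conv_point:
  assumes a: "a > 0" and b: "b > 0" and x: "x > 0" and t: "0 < t" "t < 1"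
  shows "x * (gd a (x - x * t) * gd b (x * t)) =
         (Gamma (a + b) / (Gamma a * Gamma b)) * gd (a + b) x * (t powr (b - 1) * (1 - t) powr (a - 1))"
proof -
  have Ga: "Gamma a > 0" and Gb: "Gamma b > 0" and Gab: "Gamma (a+b) > 0"
    using Gamma_real_pos a b by auto
  have xt: "x - x * t = x * (1 - t)" by (simp add: algebra_simps)
  have p1: "(x * (1 - t)) powr (a - 1) = x powr (a - 1) * (1 - t) powr (a - 1)"
    using x t by (simp add: powr_mult)
  have p2: "(x * t) powr (b - 1) = x powr (b - 1) * t powr (b - 1)"
    using x t by (simp add: powr_mult)
  have p3: "x * (x powr (a - 1) * x powr (b - 1)) = x powr (a + b - 1)"
  proof -
    have "x powr (a + b - 1) = x powr (1 + (a - 1) + (b - 1))" by (simp add: algebra_simps)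
    also have "\<dots> = x powr 1 * x powr (a - 1) * x powr (b - 1)" by (simp only: powr_add)
    also have "x powr 1 = x" using x by simp
    finally show ?thesis by (simp only: mult.assoc)
  qed
  have e: "exp (- (x * (1 - t)) / 2) * exp (- (x * t) / 2) = exp (- x / 2)"
    by (simp add: exp_add[symmetric] field_simps)
  have p4: "(2::real) powr (a + b) = 2 powr a * 2 powr b" by (simp add: powr_add)
  show ?thesis
    unfolding xt using x t Ga Gb Gab
    apply (simp add: gd_def p1 p2 p4 mult_pos_pos)
    apply (simp add: field_simps)
  proof -
    have e': "exp (- (t * x / 2)) * exp (- ((x - t * x) / 2)) = exp (- (x / 2))"
      by (simp add: exp_add[symmetric] field_simps)
    have "x * (x powr (a - 1) * (x powr (b - 1) * (exp (- (t * x / 2)) * exp (- ((x - t * x) / 2)))))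
       = (x * (x powr (a - 1) * x powr (b - 1))) * (exp (- (t * x / 2)) * exp (- ((x - t * x) / 2)))"
      by (simp only: ac_simps)
    then show "x * (x powr (a - 1) * (x powr (b - 1) * (exp (- (t * x / 2)) * exp (- ((x - t * x) / 2))))) =
        exp (- (x / 2)) * x powr (a + b - 1)" by (simp only: p3 e' mult.commute)
  qed
qed

lemma gd_conv:
  assumes a: "a > 0" and b: "b > 0"
  shows "(\<lambda>x. \<integral>\<^sup>+y. ennreal (gd a (x - y)) * ennreal (gd b y) \<partial>lborel) = (\<lambda>x. ennreal (gd (a + b) x))"
proof
  fix x :: real
  show "(\<integral>\<^sup>+y. ennreal (gd a (x - y)) * ennreal (gd b y) \<partial>lborel) = ennreal (gd (a + b) x)"
  proof (cases "x > 0")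
    case False
    then have "\<And>y. ennreal (gd a (x - y)) * ennreal (gd b y) = 0"
      by (auto simp: gd_def)
    then have "(\<integral>\<^sup>+y. ennreal (gd a (x - y)) * ennreal (gd b y) \<partial>lborel) = 0"
      by (simp only: nn_integral_0_iff_AE) (auto intro: always_eventually)
    moreover have "gd (a + b) x = 0" using False by (simp add: gd_def)
    ultimately show ?thesis by simp
  next
    case x: True
    have Ga: "Gamma a > 0" and Gb: "Gamma b > 0" and Gab: "Gamma (a+b) > 0"
      using Gamma_real_pos a b by auto
    define C where "C = Gamma (a + b) / (Gamma a * Gamma b)"
    have C: "C > 0" using Ga Gb Gab by (simp add: C_def)
    have "(\<integral>\<^sup>+y. ennreal (gd a (x - y)) * ennreal (gd b y) \<partial>lborel)
        = (\<integral>\<^sup>+y. ennreal (gd a (x - y) * gd b y) \<partial>lborel)"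
      using gd_nonneg a b by (simp add: ennreal_mult)
    also have "\<dots> = ennreal x * (\<integral>\<^sup>+t. ennreal (gd a (x - (0 + x * t)) * gd b (0 + x * t)) \<partial>lborel)"
      using x by (subst nn_integral_real_affine[where c=x and t=0]) auto
    also have "\<dots> = (\<integral>\<^sup>+t. ennreal (x * (gd a (x - x * t) * gd b (x * t))) \<partial>lborel)"
      using x gd_nonneg a b by (subst nn_integral_cmult[symmetric]) (auto simp: ennreal_mult)
    also have "\<dots> = (\<integral>\<^sup>+t. ennreal (C * gd (a + b) x) * ennreal (t powr (b - 1) * (1 - t) powr (a - 1) * indicator {0..1} t) \<partial>lborel)"
    proof (intro nn_integral_cong)
      fix t :: real
      show "ennreal (x * (gd a (x - x * t) * gd b (x * t))) =
          ennreal (C * gd (a + b) x) * ennreal (t powr (b - 1) * (1 - t) powr (a - 1) * indicator {0..1} t)"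
      proof (cases "0 < t \<and> t < 1")
        case True
        then show ?thesis using gd_conv_point[OF a b x, of t] C gd_nonneg[of "a+b" x] a b
          by (simp add: C_def ennreal_mult[symmetric] indicator_def mult.assoc)
      next
        case False
        then have "t \<le> 0 \<or> t \<ge> 1" by auto
        then show ?thesis
        proof
          assume "t \<le> 0" then show ?thesis using x
            by (cases "t = 0") (auto simp: gd_def indicator_def zero_less_mult_iff)
        next
          assume "t \<ge> 1" then show ?thesis using x
            by (cases "t = 1") (auto simp: gd_def indicator_def)
        qed
      qed
    qed
    also have "\<dots> = ennreal (C * gd (a + b) x) * (\<integral>\<^sup>+t. ennreal (t powr (b - 1) * (1 - t) powr (a - 1) * indicator {0..1} t) \<partial>lborel)"
      by (subst nn_integral_cmult) auto
    also have "(\<integral>\<^sup>+t. ennreal (t powr (b - 1) * (1 - t) powr (a - 1) * indicator {0..1} t) \<partial>lborel) = ennreal (Beta b a)"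
      using nn_integral_has_integral_lebesgue[OF _ has_integral_Beta_real[OF b a]]
      by (simp add: mult_ac)
    also have "ennreal (C * gd (a + b) x) * ennreal (Beta b a) = ennreal (gd (a + b) x)"
    proof -
      have "C * gd (a + b) x * Beta b a = gd (a + b) x"
        using Ga Gb Gab by (simp add: C_def Beta_def add.commute)
      moreover have "Beta b a \<ge> 0" using Ga Gb Gab by (simp add: Beta_def add.commute)
      ultimately show ?thesis using C gd_nonneg[of "a+b" x] a b
        by (metis ennreal_mult'' mult_nonneg_nonneg less_imp_le add_pos_pos)
    qed
    finally show ?thesis .
  qed
qed

lemma (in prob_space) gd_distributed_sum:
  assumes finI: "finite I" and A: "I \<noteq> {}"
    and pos: "\<And>i. i \<in> I \<Longrightarrow> a i > 0"
    and D: "\<And>i. i \<in> I \<Longrightarrow> distributed M lborel (X i) (\<lambda>x. ennreal (gd (a i) x))"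
    and ind: "indep_vars (\<lambda>i. borel) X I"
  shows "distributed M lborel (\<lambda>x. \<Sum>i\<in>I. X i x) (\<lambda>x. ennreal (gd (\<Sum>i\<in>I. a i) x))"
  using finI A pos D ind
proof (induct rule: finite_ne_induct)
  case (singleton i) then show ?case by auto
next
  case (insert i I)
  have posI: "(\<Sum>i\<in>I. a i) > 0"
    using insert by (intro sum_pos) auto
  have IH: "distributed M lborel (\<lambda>x. \<Sum>i\<in>I. X i x) (\<lambda>x. ennreal (gd (\<Sum>i\<in>I. a i) x))"
    using insert by (auto intro!: insert.hyps(4) intro: indep_vars_subset)
  have ind2: "indep_var borel (X i) borel (\<lambda>x. \<Sum>i\<in>I. X i x)"
    using insert by (intro indep_vars_sum) auto
  have "distributed M lborel (\<lambda>x. X i x + (\<Sum>i\<in>I. X i x))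
     (\<lambda>x. \<integral>\<^sup>+y. ennreal (gd (a i) (x - y)) * ennreal (gd (\<Sum>i\<in>I. a i) y) \<partial>lborel)"
    by (rule distributed_convolution[OF ind2 insert.prems(2)[of i] IH]) simp
  also have "(\<lambda>x. \<integral>\<^sup>+y. ennreal (gd (a i) (x - y)) * ennreal (gd (\<Sum>i\<in>I. a i) y) \<partial>lborel)
      = (\<lambda>x. ennreal (gd (a i + (\<Sum>i\<in>I. a i)) x))"
    by (rule gd_conv) (use insert posI in auto)
  finally show ?case using insert by simp
qed

lemma sq_le_iff_abs: "(0::real) \<le> c \<Longrightarrow> y\<^sup>2 \<le> c \<longleftrightarrow> -sqrt c \<le> y \<and> y \<le> sqrt c"
proof -
  assume "0 \<le> c"
  have "y\<^sup>2 \<le> c \<longleftrightarrow> sqrt (y\<^sup>2) \<le> sqrt c" by (simp only: real_sqrt_le_iff)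
  also have "\<dots> \<longleftrightarrow> \<bar>y\<bar> \<le> sqrt c" by simp
  finally show ?thesis by linarith
qed

lemma (in prob_space) gd_square_normal:
  assumes Y: "distributed M lborel Y (\<lambda>x. ennreal (std_normal_density x))"
  shows "distributed M lborel (\<lambda>\<omega>. (Y \<omega>)\<^sup>2) (\<lambda>x. ennreal (gd (1/2) x))"
proof (rule distributedI_borel_atMost[where g="\<lambda>c. measure M {\<omega>\<in>space M. (Y \<omega>)\<^sup>2 \<le> c}"])
  have [measurable]: "Y \<in> borel_measurable M" using distributed_measurable[OF Y] by simp
  show "(\<lambda>\<omega>. (Y \<omega>)\<^sup>2) \<in> borel_measurable M" by measurable
  show "gd (1/2) \<in> borel_measurable borel" by measurable
  show "AE x in lborel. 0 \<le> gd (1 / 2) x" by (simp add: gd_nonneg)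
  fix c :: real
  show "emeasure M {x \<in> space M. (Y x)\<^sup>2 \<le> c} = ennreal (measure M {\<omega> \<in> space M. (Y \<omega>)\<^sup>2 \<le> c})"
    by (simp add: emeasure_eq_measure)
  show "(\<integral>\<^sup>+x. ennreal (gd (1/2) x * indicator {..c} x) \<partial>lborel) = ennreal (measure M {\<omega> \<in> space M. (Y \<omega>)\<^sup>2 \<le> c})"
  proof (cases "c < 0")
    case True
    have "{\<omega> \<in> space M. (Y \<omega>)\<^sup>2 \<le> c} = {}"
      using True by (auto simp: not_le intro: less_le_trans[OF True])
    moreover have "\<And>x. ennreal (gd (1/2) x * indicator {..c} x) = 0"
      using True by (auto simp: gd_def indicator_def)
    then have "(\<integral>\<^sup>+x. ennreal (gd (1/2) x * indicator {..c} x) \<partial>lborel) = 0"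
      by (simp only: nn_integral_0_iff_AE) (auto intro: always_eventually)
    ultimately show ?thesis by (simp only:) simp
  next
    case False
    then have c: "c \<ge> 0" by simp
    define r where "r = sqrt c"
    have r: "r \<ge> 0" "r\<^sup>2 = c" using c by (auto simp: r_def)
    have set: "{\<omega> \<in> space M. (Y \<omega>)\<^sup>2 \<le> c} = Y -` {-r..r} \<inter> space M"
      using c by (auto simp: sq_le_iff_abs r_def)
    have "ennreal (measure M {\<omega> \<in> space M. (Y \<omega>)\<^sup>2 \<le> c}) = emeasure M (Y -` {-r..r} \<inter> space M)"
      by (simp add: emeasure_eq_measure set)
    also have "\<dots> = (\<integral>\<^sup>+x. ennreal (std_normal_density x) * indicator {-r..r} x \<partial>lborel)"
      by (rule distributed_emeasure[OF Y]) simp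
    also have "\<dots> = (\<integral>\<^sup>+x. ennreal (std_normal_density x * indicator {-r..0} x) + ennreal (std_normal_density x * indicator {0..r} x) \<partial>lborel)"
      by (intro nn_integral_cong_AE AE_I[where N="{0}"])
         (auto simp: indicator_def emeasure_lborel_countable)
    also have "\<dots> = (\<integral>\<^sup>+x. ennreal (std_normal_density x * indicator {-r..0} x) \<partial>lborel) + (\<integral>\<^sup>+x. ennreal (std_normal_density x * indicator {0..r} x) \<partial>lborel)"
      by (rule nn_integral_add) auto
    also have "(\<integral>\<^sup>+x. ennreal (std_normal_density x * indicator {-r..0} x) \<partial>lborel) = (\<integral>\<^sup>+x. ennreal (std_normal_density x * indicator {0..r} x) \<partial>lborel)"
      by (subst nn_integral_real_affine[where c="-1" and t=0])
         (auto simp: indicator_def normal_density_def intro!: nn_integral_cong)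
    also have "(\<integral>\<^sup>+x. ennreal (std_normal_density x * indicator {0..r} x) \<partial>lborel) + (\<integral>\<^sup>+x. ennreal (std_normal_density x * indicator {0..r} x) \<partial>lborel)
       = (\<integral>\<^sup>+x. ennreal (gd (1/2) (x\<^sup>2) * (2 * x) * indicator {0..r} x) \<partial>lborel)"
    proof -
      have "(\<integral>\<^sup>+x. ennreal (std_normal_density x * indicator {0..r} x) \<partial>lborel) + (\<integral>\<^sup>+x. ennreal (std_normal_density x * indicator {0..r} x) \<partial>lborel)
          = (\<integral>\<^sup>+x. ennreal (std_normal_density x * indicator {0..r} x) + ennreal (std_normal_density x * indicator {0..r} x) \<partial>lborel)"
        by (rule nn_integral_add[symmetric]) auto
      also have "\<dots> = (\<integral>\<^sup>+x. ennreal (gd (1/2) (x\<^sup>2) * (2 * x) * indicator {0..r} x) \<partial>lborel)"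
      proof -
        have pw: "ennreal (std_normal_density x * indicator {0..r} x) + ennreal (std_normal_density x * indicator {0..r} x) =
              ennreal (gd (1/2) (x\<^sup>2) * (2 * x) * indicator {0..r} x)" if x: "x \<noteq> 0" for x
        proof (cases "0 < x \<and> x \<le> r")
          case True
          have "gd (1/2) (x\<^sup>2) * (2 * x) = 2 * std_normal_density x"
            using True by (simp add: gd_def normal_density_def powr_minus powr_half_sqrt
                 Gamma_one_half_real real_sqrt_mult field_simps)
          then show ?thesis using True
            apply (simp add: indicator_def ennreal_plus[symmetric] del: ennreal_plus)
            by (metis mult.left_commute)
        next
          case False
          then show ?thesis using x by (auto simp: indicator_def)
        qed
        show ?thesis
          by (intro nn_integral_cong_AE AE_I[where N="{0}"]) (use pw in auto)
      qed
      finally show ?thesis .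
    qed
    also have "\<dots> = (\<integral>\<^sup>+x. ennreal (gd (1/2) x * indicator {0\<^sup>2..r\<^sup>2} x) \<partial>lborel)"
      by (subst nn_integral_substitution[where g = "\<lambda>x. x ^ 2" and g' = "\<lambda>x. 2 * x", symmetric])
         (auto intro!: derivative_eq_intros continuous_intros simp: set_borel_measurable_def r)
    also have "\<dots> = (\<integral>\<^sup>+x. ennreal (gd (1/2) x * indicator {..c} x) \<partial>lborel)"
      using r by (intro nn_integral_cong) (auto simp: indicator_def gd_def)
    finally show ?thesis ..
  qed
qed

lemma chi_eq_gd: "chi_square_density m = gd (real m / 2)"
  by (simp add: fun_eq_iff chi_square_density_def gd_def)

lemma (in prob_space) chi_sq_distributed:
  assumes finI: "finite I" and A: "I \<noteq> {}" and s: "\<sigma> > 0"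
    and ind: "indep_vars (\<lambda>_. borel) Z I"
    and D: "\<And>i. i \<in> I \<Longrightarrow> distributed M lborel (Z i) (\<lambda>x. ennreal (normal_density 0 \<sigma> x))"
  shows "distributed M lborel (\<lambda>\<omega>. \<Sum>i\<in>I. (Z i \<omega> / \<sigma>)\<^sup>2) (\<lambda>x. ennreal (chi_square_density (card I) x))"
proof -
  have D2: "distributed M lborel (\<lambda>\<omega>. (Z i \<omega> / \<sigma>)\<^sup>2) (\<lambda>x. ennreal (gd (1/2) x))" if "i \<in> I" for i
  proof -
    have "distributed M lborel (\<lambda>\<omega>. (Z i \<omega> - 0) / \<sigma>) (\<lambda>x. ennreal (std_normal_density x))"
      using D[OF that] normal_standard_normal_convert[OF s] by blast
    then show ?thesis using gd_square_normal by simp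
  qed
  have ind2: "indep_vars (\<lambda>_. borel) (\<lambda>i \<omega>. (Z i \<omega> / \<sigma>)\<^sup>2) I"
    by (rule indep_vars_compose2[OF ind, where Y="\<lambda>i x. (x / \<sigma>)\<^sup>2"]) auto
  have "distributed M lborel (\<lambda>\<omega>. \<Sum>i\<in>I. (Z i \<omega> / \<sigma>)\<^sup>2) (\<lambda>x. ennreal (gd (\<Sum>i\<in>I. 1/2) x))"
    by (rule gd_distributed_sum[OF finI A _ D2 ind2]) auto
  then show ?thesis by (simp add: chi_eq_gd)
qed

lemma (in prob_space) chi_sq_cdf:
  assumes finI: "finite I" and A: "I \<noteq> {}" and s: "\<sigma> > 0"
    and ind: "indep_vars (\<lambda>_. borel) Z I"
    and D: "\<And>i. i \<in> I \<Longrightarrow> distributed M lborel (Z i) (\<lambda>x. ennreal (normal_density 0 \<sigma> x))"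
  shows "measure M {\<omega>\<in>space M. (\<Sum>i\<in>I. (Z i \<omega> / \<sigma>)\<^sup>2) \<le> t} = chi_square_cdf (card I) t"
proof -
  note Dc = chi_sq_distributed[OF assms]
  have [measurable]: "(\<lambda>\<omega>. \<Sum>i\<in>I. (Z i \<omega> / \<sigma>)\<^sup>2) \<in> borel_measurable M"
    using distributed_measurable[OF Dc] by simp
  have "measure M {\<omega>\<in>space M. (\<Sum>i\<in>I. (Z i \<omega> / \<sigma>)\<^sup>2) \<le> t}
      = measure (distr M lborel (\<lambda>\<omega>. \<Sum>i\<in>I. (Z i \<omega> / \<sigma>)\<^sup>2)) {..t}"
    by (subst measure_distr) (auto intro!: arg_cong[where f="measure M"])
  also have "\<dots> = measure (density lborel (\<lambda>x. ennreal (chi_square_density (card I) x))) {..t}"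
    using distributed_distr_eq_density[OF Dc] by simp
  finally show ?thesis by (simp add: chi_square_cdf_def cdf_def)
qed

lemma cs_bound:
  fixes c h p :: "'c::finite \<Rightarrow> real"
  assumes p0: "\<And>j. p j \<ge> 0" and p1: "(\<Sum>j\<in>UNIV. p j) = 1"
  shows "\<bar>\<Sum>j\<in>UNIV. c j * (p j * (h j - (\<Sum>i\<in>UNIV. p i * h i)))\<bar>
         \<le> sqrt (\<Sum>j\<in>UNIV. (c j)\<^sup>2) * sqrt (\<Sum>j\<in>UNIV. (h j)\<^sup>2)"
proof -
  define m where "m = (\<Sum>i\<in>UNIV. p i * h i)"
  have ple: "p j \<le> 1" for j
  proof -
    have "p j \<le> (\<Sum>j\<in>UNIV. p j)" by (rule member_le_sum) (auto simp: p0)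
    then show ?thesis using p1 by simp
  qed
  have "(\<Sum>j\<in>UNIV. (p j * (h j - m))\<^sup>2) \<le> (\<Sum>j\<in>UNIV. p j * (h j - m)\<^sup>2)"
  proof (rule sum_mono)
    fix j
    have "p j * p j \<le> p j" using ple[of j] p0[of j] by (simp add: mult_left_le)
    then have "(p j)\<^sup>2 * (h j - m)\<^sup>2 \<le> p j * (h j - m)\<^sup>2"
      by (intro mult_right_mono) (auto simp: power2_eq_square)
    then show "(p j * (h j - m))\<^sup>2 \<le> p j * (h j - m)\<^sup>2"
      by (simp only: power_mult_distrib)
  qed
  also have "(\<Sum>j\<in>UNIV. p j * (h j - m)\<^sup>2) = (\<Sum>j\<in>UNIV. p j * (h j)\<^sup>2 - 2 * m * (p j * h j) + m\<^sup>2 * p j)"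
    by (intro sum.cong) (simp_all add: power2_eq_square algebra_simps)
  also have "\<dots> = (\<Sum>j\<in>UNIV. p j * (h j)\<^sup>2) - 2 * m * (\<Sum>j\<in>UNIV. p j * h j) + m\<^sup>2 * (\<Sum>j\<in>UNIV. p j)"
    by (simp add: sum.distrib sum_subtractf sum_distrib_left)
  also have "\<dots> = (\<Sum>j\<in>UNIV. p j * (h j)\<^sup>2) - 2 * m * m + m\<^sup>2 * (\<Sum>j\<in>UNIV. p j)"
    by (simp add: m_def)
  also have "\<dots> = (\<Sum>j\<in>UNIV. p j * (h j)\<^sup>2) - m\<^sup>2" using p1 by (simp add: power2_eq_square)
  also have "\<dots> \<le> (\<Sum>j\<in>UNIV. (h j)\<^sup>2)"
  proof -
    have "(\<Sum>j\<in>UNIV. p j * (h j)\<^sup>2) \<le> (\<Sum>j\<in>UNIV. (h j)\<^sup>2)"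
      by (rule sum_mono) (use ple in \<open>simp add: mult_left_le_one_le p0\<close>)
    then show ?thesis by (smt (verit) zero_le_power2)
  qed
  finally have q: "(\<Sum>j\<in>UNIV. (p j * (h j - m))\<^sup>2) \<le> (\<Sum>j\<in>UNIV. (h j)\<^sup>2)" .
  have "(\<Sum>j\<in>UNIV. c j * (p j * (h j - m)))\<^sup>2 \<le> (\<Sum>j\<in>UNIV. (c j)\<^sup>2) * (\<Sum>j\<in>UNIV. (p j * (h j - m))\<^sup>2)"
    by (rule Cauchy_Schwarz_ineq_sum)
  also have "\<dots> \<le> (\<Sum>j\<in>UNIV. (c j)\<^sup>2) * (\<Sum>j\<in>UNIV. (h j)\<^sup>2)"
    by (rule mult_left_mono[OF q]) (simp add: sum_nonneg)
  finally have "(\<Sum>j\<in>UNIV. c j * (p j * (h j - m)))\<^sup>2 \<le> (\<Sum>j\<in>UNIV. (c j)\<^sup>2) * (\<Sum>j\<in>UNIV. (h j)\<^sup>2)" .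
  then have "sqrt ((\<Sum>j\<in>UNIV. c j * (p j * (h j - m)))\<^sup>2) \<le> sqrt ((\<Sum>j\<in>UNIV. (c j)\<^sup>2) * (\<Sum>j\<in>UNIV. (h j)\<^sup>2))"
    by (rule real_sqrt_le_mono)
  then show ?thesis by (simp add: m_def real_sqrt_mult)
qed

lemma norm_vec_sqrt: "norm (x :: real^'c) = sqrt (\<Sum>j\<in>UNIV. (x $ j)\<^sup>2)"
  by (simp add: norm_vec_def L2_set_def)

lemma norm_vec_sq: "(norm (x :: real^'c))\<^sup>2 = (\<Sum>j\<in>UNIV. (x $ j)\<^sup>2)"
  by (simp add: norm_vec_sqrt sum_nonneg)

lemma softmax_lipschitz:
  fixes v w :: "real^'c"
  shows "norm (softmax v - softmax w) \<le> norm (v - w)"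
proof -
  define c where "c = softmax v - softmax w"
  define h where "h j = v $ j - w $ j" for j
  define e where "e j t = exp (w $ j + t * h j)" for j t
  define Z where "Z t = (\<Sum>i\<in>UNIV. e i t)" for t
  define p where "p t j = e j t / Z t" for t j
  define g where "g t = (\<Sum>j\<in>UNIV. c $ j * (e j t / Z t))" for t
  define g' where "g' t = (\<Sum>j\<in>UNIV. c $ j * (p t j * (h j - (\<Sum>i\<in>UNIV. p t i * h i))))" for t
  have Zpos: "Z t > 0" for t unfolding Z_def e_def by (intro sum_pos) auto
  have der: "DERIV g t :> g' t" for t
  proof -
    have "DERIV g t :> (\<Sum>j\<in>UNIV. c $ j * ((e j t * h j * Z t - e j t * (\<Sum>i\<in>UNIV. e i t * h i)) / (Z t * Z t)))"
      unfolding g_def Z_def e_def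
      using Zpos[of t] unfolding Z_def e_def
      by (auto intro!: derivative_eq_intros simp: algebra_simps)
    also have "(\<Sum>j\<in>UNIV. c $ j * ((e j t * h j * Z t - e j t * (\<Sum>i\<in>UNIV. e i t * h i)) / (Z t * Z t))) = g' t"
      unfolding g'_def p_def using Zpos[of t]
      by (intro sum.cong refl) (simp add: field_simps sum_divide_distrib[symmetric] sum_distrib_left)
    finally show ?thesis .
  qed
  obtain z where "0 < z" "z < 1" and mvt: "g 1 - g 0 = (1 - 0) * g' z"
    using MVT2[of 0 1 g g'] der by auto
  have sm: "softmax x $ j = exp (x $ j) / (\<Sum>i\<in>UNIV. exp (x $ i))" for x :: "real^'c" and j
    by (simp add: softmax_def)
  have g1: "g 1 = (\<Sum>j\<in>UNIV. c $ j * softmax v $ j)"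
    unfolding g_def Z_def e_def h_def by (simp add: sm)
  have g0: "g 0 = (\<Sum>j\<in>UNIV. c $ j * softmax w $ j)"
    unfolding g_def Z_def e_def h_def by (simp add: sm)
  have "g 1 - g 0 = (\<Sum>j\<in>UNIV. (c $ j)\<^sup>2)"
    unfolding g1 g0 sum_subtractf[symmetric] by (simp add: c_def power2_eq_square algebra_simps)
  then have eq: "(norm c)\<^sup>2 = g' z" using mvt by (simp add: norm_vec_sq)
  have p0: "p z j \<ge> 0" for j using Zpos[of z] by (simp add: p_def e_def)
  have p1: "(\<Sum>j\<in>UNIV. p z j) = 1" using Zpos[of z] by (simp add: p_def Z_def sum_divide_distrib[symmetric])
  have "\<bar>g' z\<bar> \<le> sqrt (\<Sum>j\<in>UNIV. (c $ j)\<^sup>2) * sqrt (\<Sum>j\<in>UNIV. (h j)\<^sup>2)"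
    unfolding g'_def by (rule cs_bound[OF p0 p1])
  also have "\<dots> = norm c * norm (v - w)"
    by (simp add: norm_vec_sqrt h_def)
  finally have "(norm c)\<^sup>2 \<le> norm c * norm (v - w)" using eq by simp
  then have "norm c \<le> norm (v - w)"
    by (cases "norm c = 0") (auto simp: power2_eq_square)
  then show ?thesis by (simp add: c_def)
qed

lemma meas_vec:
  assumes "\<And>i. (\<lambda>\<omega>. f \<omega> $ i) \<in> borel_measurable M"
  shows "(f :: _ \<Rightarrow> 'a::euclidean_space^'n) \<in> borel_measurable M"
proof (subst borel_measurable_euclidean_space, intro ballI)
  fix b :: "'a^'n" assume "b \<in> Basis"
  then obtain i u where b: "b = axis i u" and u: "u \<in> Basis" by (auto simp: Basis_vec_def)
  have "(\<lambda>\<omega>. f \<omega> $ i \<bullet> u) \<in> borel_measurable M"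
    using assms[of i] by measurable
  then show "(\<lambda>x. f x \<bullet> b) \<in> borel_measurable M" by (simp add: b inner_axis)
qed

lemma spec_norm_bound: "norm (x v* B) \<le> spec_norm (transpose B) * norm (x :: real^'n)"
proof -
  have bl: "bounded_linear (\<lambda>y. transpose B *v y)"
    using matrix_vector_mul_linear[of "transpose B"] linear_conv_bounded_linear by blast
  show ?thesis
    using onorm[OF bl, of x] unfolding spec_norm_def transpose_matrix_vector .
qed

lemma spec_norm_nonneg: "spec_norm (A :: real^'n^'m) \<ge> 0"
  unfolding spec_norm_def
  by (rule onorm_pos_le) (use matrix_vector_mul_linear[of A] linear_conv_bounded_linear in blast)

definition frob :: "real^'d^'n \<Rightarrow> real" where
  "frob S = sqrt (\<Sum>i\<in>UNIV. \<Sum>j\<in>UNIV. (S $ i $ j)\<^sup>2)"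

lemma frob_nonneg: "frob S \<ge> 0"
  by (simp add: frob_def sum_nonneg)

lemma frob_bound: "norm (x v* S) \<le> frob S * norm (x :: real^'n)"
proof -
  have "(norm (x v* S))\<^sup>2 = (\<Sum>j\<in>UNIV. (\<Sum>i\<in>UNIV. S $ i $ j * x $ i)\<^sup>2)"
    unfolding norm_vec_sq vector_matrix_mult_def by (simp add: mult.commute)
  also have "\<dots> \<le> (\<Sum>j\<in>UNIV. (\<Sum>i\<in>UNIV. (S $ i $ j)\<^sup>2) * (\<Sum>i\<in>UNIV. (x $ i)\<^sup>2))"
    by (rule sum_mono) (rule Cauchy_Schwarz_ineq_sum)
  also have "\<dots> = (\<Sum>j\<in>UNIV. \<Sum>i\<in>UNIV. (S $ i $ j)\<^sup>2) * (norm x)\<^sup>2"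
    by (simp only: norm_vec_sq sum_distrib_right)
  also have "\<dots> = (frob S * norm x)\<^sup>2"
    by (subst sum.swap) (simp add: frob_def power_mult_distrib sum_nonneg)
  finally show ?thesis
    by (rule power2_le_imp_le) (simp add: frob_nonneg)
qed

lemma Psi_diff_bound:
  fixes \<Theta> :: "real^'c^'d" and A E :: "real^'n^'n" and X S :: "real^'d^'n"
  shows "norm (Psi \<Theta> u A (X + S) - Psi \<Theta> u E (X + S))
     \<le> spec_norm (transpose \<Theta>) * (spec_norm (transpose X) + frob S) * norm (A $ u - E $ u)"
proof -
  define D where "D = A $ u - E $ u"
  have "norm (Psi \<Theta> u A (X + S) - Psi \<Theta> u E (X + S))
      \<le> norm (((A $ u) v* (X + S)) v* \<Theta> - ((E $ u) v* (X + S)) v* \<Theta>)"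
    unfolding Psi_def by (rule softmax_lipschitz)
  also have "((A $ u) v* (X + S)) v* \<Theta> - ((E $ u) v* (X + S)) v* \<Theta> = (D v* (X + S)) v* \<Theta>"
    by (simp add: D_def vector_matrix_mult_diff_distrib)
  also have "norm \<dots> \<le> spec_norm (transpose \<Theta>) * norm (D v* (X + S))"
    by (rule spec_norm_bound)
  also have "norm (D v* (X + S)) \<le> spec_norm (transpose X) * norm D + frob S * norm D"
  proof -
    have "norm (D v* (X + S)) \<le> norm (D v* X) + norm (D v* S)"
      by (simp add: vector_matrix_mult_add_rdistrib norm_triangle_ineq)
    also have "\<dots> \<le> spec_norm (transpose X) * norm D + frob S * norm D"
      by (intro add_mono spec_norm_bound frob_bound)
    finally show ?thesis .
  qed
  then have "spec_norm (transpose \<Theta>) * norm (D v* (X + S)) \<le> spec_norm (transpose \<Theta>) * (spec_norm (transpose X) * norm D + frob S * norm D)"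
    by (rule mult_left_mono) (rule spec_norm_nonneg)
  finally show ?thesis by (simp add: D_def algebra_simps)
qed

lemma chi_cdf_nonpos: "x \<le> 0 \<Longrightarrow> chi_square_cdf m x = 0"
proof -
  assume x: "x \<le> 0"
  have "emeasure (density lborel (\<lambda>t. ennreal (chi_square_density m t))) {..x}
      = (\<integral>\<^sup>+t. ennreal (chi_square_density m t) * indicator {..x} t \<partial>lborel)"
    by (rule emeasure_density) (auto simp: chi_eq_gd)
  also have "\<dots> = 0"
  proof -
    have "\<And>t. ennreal (chi_square_density m t) * indicator {..x} t = 0"
      using x by (auto simp: chi_square_density_def indicator_def)
    then show ?thesis by (simp only: nn_integral_0_iff_AE) (auto intro: always_eventually)
  qed
  finally show ?thesis
    by (simp add: chi_square_cdf_def cdf_def measure_def)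
qed

lemma G_cont:
  fixes \<Theta> :: "real^'c^'d" and A E :: "real^'n^'n" and X :: "real^'d^'n"
  shows "continuous_on UNIV (\<lambda>Y. norm (Psi \<Theta> u A (X + Y) - Psi \<Theta> u E (X + Y)))"
proof -
  have pos: "(\<Sum>i\<in>UNIV. exp (f i :: real)) \<noteq> 0" for f :: "'c \<Rightarrow> real"
    by (rule less_imp_neq[symmetric], rule sum_pos) auto
  show ?thesis
    unfolding Psi_def softmax_def vector_matrix_mult_def
    by (intro continuous_intros) (auto simp: pos)
qed

theorem lemma2:
  fixes X :: "real^'d^'n" and \<Theta> :: "real^'c^'d" and A E :: "real^'n^'n"
    and L :: nat and u :: 'n and K :: "'k set"
    and M :: "'a measure" and \<Sigma> :: "'k \<Rightarrow> 'a \<Rightarrow> real^'d^'n"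
    and \<sigma> \<xi> :: real
  assumes "L \<ge> 1"
    and "matpow A L $ u - E $ u \<noteq> 0"
    and "finite K" and "K \<noteq> {}"
    and "prob_space M"
    and "\<sigma> > 0"
    and "prob_space.indep_vars M (\<lambda>_. borel) (\<lambda>(k, i, j) \<omega>. \<Sigma> k \<omega> $ i $ j) (K \<times> UNIV \<times> UNIV)"
    and "\<And>k i j. k \<in> K \<Longrightarrow>
           distributed M lborel (\<lambda>\<omega>. \<Sigma> k \<omega> $ i $ j) (\<lambda>x. ennreal (normal_density 0 \<sigma> x))"
  shows
    "let \<Delta> = matpow A L $ u - E $ u;
         \<gamma>\<^sub>1 = spec_norm (transpose \<Theta>) * spec_norm (transpose X);
         \<gamma>\<^sub>2 = spec_norm (transpose \<Theta>) / (real (card K) + 1);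
         S = (\<lambda>\<omega>. (1 / (real (card K) + 1)) *
               (norm (Psi \<Theta> u (matpow A L) (X + 0) - Psi \<Theta> u E (X + 0))
                + (\<Sum>k\<in>K. norm (Psi \<Theta> u (matpow A L) (X + \<Sigma> k \<omega>) - Psi \<Theta> u E (X + \<Sigma> k \<omega>)))))
     in measure M {\<omega> \<in> space M. S \<omega> \<le> \<xi>}
        \<ge> chi_square_cdf (card K * CARD('n) * CARD('d))
             ((\<xi> - \<gamma>\<^sub>1 * norm \<Delta>) / (\<gamma>\<^sub>2 * norm \<Delta> * \<sigma>) - real (card K))"
proof -
  note D0 = assms(2) and finK = assms(3) and Kne = assms(4) and s = assms(6)
    and ind = assms(7) and Dist = assms(8)
  interpret prob_space M by (rule assms(5))
  define AL where "AL = matpow A L"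
  define nD where "nD = norm (AL $ u - E $ u)"
  define T where "T = spec_norm (transpose \<Theta>)"
  define sX where "sX = spec_norm (transpose X)"
  define \<kappa> where "\<kappa> = real (card K)"
  define G where "G Y = norm (Psi \<Theta> u AL (X + Y) - Psi \<Theta> u E (X + Y))" for Y
  define S where "S \<omega> = (1 / (\<kappa> + 1)) * (G 0 + (\<Sum>k\<in>K. G (\<Sigma> k \<omega>)))" for \<omega>
  define I where "I = K \<times> (UNIV :: 'n set) \<times> (UNIV :: 'd set)"
  define Z where "Z = (\<lambda>(k, i, j) \<omega>. \<Sigma> k \<omega> $ i $ j)"
  define Q where "Q \<omega> = (\<Sum>p\<in>I. (Z p \<omega> / \<sigma>)\<^sup>2)" for \<omega>
  have nD: "nD > 0" using D0 by (simp add: nD_def AL_def)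
  have T0: "T \<ge> 0" and sX0: "sX \<ge> 0" by (simp_all add: T_def sX_def spec_norm_nonneg)
  have \<kappa>0: "\<kappa> \<ge> 0" by (simp add: \<kappa>_def)
  have cardI: "card I = card K * CARD('n) * CARD('d)"
    by (simp add: I_def card_cartesian_product)
  have finI: "finite I" and Ine: "I \<noteq> {}" using finK Kne by (auto simp: I_def)
  have DZ: "distributed M lborel (Z p) (\<lambda>x. ennreal (normal_density 0 \<sigma> x))" if "p \<in> I" for p
    using that Dist by (auto simp: I_def Z_def)
  have chi: "measure M {\<omega>\<in>space M. Q \<omega> \<le> t} = chi_square_cdf (card K * CARD('n) * CARD('d)) t" for t
    unfolding Q_def cardI[symmetric]
    by (rule chi_sq_cdf[OF finI Ine s _ DZ]) (use ind in \<open>simp add: I_def Z_def\<close>)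
  have SigM: "(\<lambda>\<omega>. \<Sigma> k \<omega>) \<in> borel_measurable M" if "k \<in> K" for k
    by (intro meas_vec) (rule distributed_measurable[OF Dist[OF that], simplified])
  have GM: "G \<in> borel_measurable borel"
    unfolding G_def by (rule borel_measurable_continuous_onI) (rule G_cont)
  have SM: "S \<in> borel_measurable M"
    unfolding S_def
    by (intro borel_measurable_times borel_measurable_add borel_measurable_const borel_measurable_sum
              measurable_compose[OF SigM GM])
  have QM: "Q \<in> borel_measurable M"
    unfolding Q_def
    by (intro borel_measurable_sum borel_measurable_power borel_measurable_divide borel_measurable_const)
       (rule distributed_measurable[OF DZ, simplified])
  have Qeq: "Q \<omega> = (\<Sum>k\<in>K. (frob (\<Sigma> k \<omega>))\<^sup>2 / \<sigma>\<^sup>2)" for \<omega>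
  proof -
    have "Q \<omega> = (\<Sum>k\<in>K. \<Sum>i\<in>UNIV. \<Sum>j\<in>UNIV. (\<Sigma> k \<omega> $ i $ j / \<sigma>)\<^sup>2)"
      apply (simp add: Q_def I_def Z_def sum.cartesian_product)
      by (intro sum.cong refl) (simp split: prod.splits)
    also have "\<dots> = (\<Sum>k\<in>K. (frob (\<Sigma> k \<omega>))\<^sup>2 / \<sigma>\<^sup>2)"
      by (simp add: frob_def sum_nonneg power_divide sum_divide_distrib)
    finally show ?thesis .
  qed
  have bound: "S \<omega> \<le> T * sX * nD + T / (\<kappa> + 1) * nD * \<sigma> * (\<kappa> + Q \<omega>)" for \<omega>
  proof -
    have G0: "G 0 \<le> T * sX * nD"
      using Psi_diff_bound[of \<Theta> u AL X 0 E] by (simp add: G_def T_def sX_def nD_def frob_def)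
    have Gk: "G (\<Sigma> k \<omega>) \<le> T * nD * (sX + frob (\<Sigma> k \<omega>))" for k
      using Psi_diff_bound[of \<Theta> u AL X "\<Sigma> k \<omega>" E] by (simp add: G_def T_def sX_def nD_def algebra_simps)
    have fr: "frob Y \<le> \<sigma> + (frob Y)\<^sup>2 / \<sigma>" for Y :: "real^'d^'n"
    proof -
      have "\<sigma> * frob Y \<le> \<sigma>\<^sup>2 + (frob Y)\<^sup>2"
      proof -
        have "0 \<le> (\<sigma> - frob Y)\<^sup>2" by simp
        then have "2 * (\<sigma> * frob Y) \<le> \<sigma>\<^sup>2 + (frob Y)\<^sup>2" by (simp add: power2_diff)
        moreover have "0 \<le> \<sigma> * frob Y" using s frob_nonneg[of Y] by simp
        ultimately show ?thesis by linarith
      qed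
      then show ?thesis using s by (simp add: field_simps power2_eq_square)
    qed
    have "(\<Sum>k\<in>K. G (\<Sigma> k \<omega>)) \<le> (\<Sum>k\<in>K. T * nD * (sX + \<sigma> + (frob (\<Sigma> k \<omega>))\<^sup>2 / \<sigma>))"
    proof (rule sum_mono)
      fix k
      have "T * nD * (sX + frob (\<Sigma> k \<omega>)) \<le> T * nD * (sX + \<sigma> + (frob (\<Sigma> k \<omega>))\<^sup>2 / \<sigma>)"
        using fr[of "\<Sigma> k \<omega>"] T0 nD by (intro mult_left_mono) auto
      then show "G (\<Sigma> k \<omega>) \<le> T * nD * (sX + \<sigma> + (frob (\<Sigma> k \<omega>))\<^sup>2 / \<sigma>)" using Gk[of k] by linarith
    qed
    also have "\<dots> = T * nD * (\<kappa> * sX + \<kappa> * \<sigma> + (\<Sum>k\<in>K. (frob (\<Sigma> k \<omega>))\<^sup>2 / \<sigma>))"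
    proof -
      have "(\<Sum>k\<in>K. T * nD * (sX + \<sigma> + (frob (\<Sigma> k \<omega>))\<^sup>2 / \<sigma>))
          = T * nD * (\<Sum>k\<in>K. (sX + \<sigma>) + (frob (\<Sigma> k \<omega>))\<^sup>2 / \<sigma>)"
        by (rule sum_distrib_left[symmetric])
      also have "(\<Sum>k\<in>K. (sX + \<sigma>) + (frob (\<Sigma> k \<omega>))\<^sup>2 / \<sigma>) = \<kappa> * (sX + \<sigma>) + (\<Sum>k\<in>K. (frob (\<Sigma> k \<omega>))\<^sup>2 / \<sigma>)"
        by (simp add: sum.distrib \<kappa>_def)
      finally show ?thesis by (simp add: algebra_simps)
    qed
    also have "(\<Sum>k\<in>K. (frob (\<Sigma> k \<omega>))\<^sup>2 / \<sigma>) = \<sigma> * Q \<omega>"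
      unfolding Qeq sum_distrib_left using s by (intro sum.cong refl) (simp add: power2_eq_square)
    finally have sk: "(\<Sum>k\<in>K. G (\<Sigma> k \<omega>)) \<le> T * nD * (\<kappa> * sX + \<kappa> * \<sigma> + \<sigma> * Q \<omega>)" .
    have "S \<omega> \<le> (1 / (\<kappa> + 1)) * (T * sX * nD + T * nD * (\<kappa> * sX + \<kappa> * \<sigma> + \<sigma> * Q \<omega>))"
      unfolding S_def using G0 sk \<kappa>0 by (intro mult_left_mono) auto
    also have "\<dots> = T * sX * nD + T / (\<kappa> + 1) * nD * \<sigma> * (\<kappa> + Q \<omega>)"
      using \<kappa>0 by (simp add: field_simps)
    finally show ?thesis .
  qed
  have main: "measure M {\<omega> \<in> space M. S \<omega> \<le> \<xi>}
      \<ge> chi_square_cdf (card K * CARD('n) * CARD('d)) ((\<xi> - T * sX * nD) / (T / (\<kappa> + 1) * nD * \<sigma>) - \<kappa>)"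
  proof (cases "T = 0")
    case True
    have "chi_square_cdf (card K * CARD('n) * CARD('d)) ((\<xi> - T * sX * nD) / (T / (\<kappa> + 1) * nD * \<sigma>) - \<kappa>) = 0"
      using True \<kappa>0 by (intro chi_cdf_nonpos) simp
    then show ?thesis by simp
  next
    case False
    then have Tp: "T > 0" using T0 by simp
    define c where "c = T / (\<kappa> + 1) * nD * \<sigma>"
    have c: "c > 0" using Tp nD s \<kappa>0 by (simp add: c_def)
    define t where "t = (\<xi> - T * sX * nD) / c - \<kappa>"
    have sub: "{\<omega>\<in>space M. Q \<omega> \<le> t} \<subseteq> {\<omega> \<in> space M. S \<omega> \<le> \<xi>}"
    proof safe
      fix \<omega> assume "\<omega> \<in> space M" "Q \<omega> \<le> t"
      then have "c * (\<kappa> + Q \<omega>) \<le> c * (\<kappa> + t)" using c by (intro mult_left_mono) auto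
      also have "c * (\<kappa> + t) = \<xi> - T * sX * nD" using c by (simp add: t_def)
      finally show "S \<omega> \<le> \<xi>" using bound[of \<omega>] by (simp add: c_def)
    qed
    have "measure M {\<omega>\<in>space M. Q \<omega> \<le> t} \<le> measure M {\<omega> \<in> space M. S \<omega> \<le> \<xi>}"
      by (rule finite_measure_mono[OF sub]) (use SM in measurable)
    then show ?thesis using chi[of t] by (simp add: t_def c_def)
  qed
  show ?thesis
    unfolding Let_def
    using main by (simp add: S_def G_def AL_def T_def sX_def nD_def \<kappa>_def)
qed

end
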